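(* Assume (A1), (A2), (A3). For all $x,\tilde x,v,\tilde v\in\mathbb R^d$, \[r(x,\tilde x,v,\tilde v)^2\le2\,\frac{(1+\alpha)^2+\alpha^2}{\min(\frac13\lambda,3)}\big(H(x,v)+H(\tilde x,\tilde v)\big),\] so that in particular, if $r(x,\tilde x,v,\tilde v)\ge R_1$ then $\gamma H(x,v)+\gamma H(\tilde x,\tilde v)\ge\frac{12}5B$.
   Context: $U,W\in\mathcal C^1(\mathbb R^d)$. (A1): $U\ge0$ and there exist $\lambda>0$, $A\ge0$ with $\tfrac12\nabla U(x)\cdot x\ge\lambda(U(x)+|x|^2/4)-A$ for all $x$. (A2): $\nabla U$ is $L_U$-Lipschitz, $L_U>0$. (A3): $W$ even, $\nabla W$ is $L_W$-Lipschitz, $L_W<\lambda/8$. Fix $\tilde A\ge0$ with $U(x)\ge\frac\lambda6|x|^2-\tilde A$ for all $x$. Set $\gamma=\frac{\lambda}{2(\lambda+1)}$, $B=24(A+(\lambda-\gamma)\tilde A+d)$, $H(x,v)=24U(x)+(6(1-\gamma)+\lambda)|x|^2+12x\cdot v+12|v|^2$, $\alpha=L_U+\frac\lambda4$, $R_1=\sqrt{\frac{24((1+\alpha)^2+\alpha^2)}{5\gamma\min(3,\lambda/3)}B}$, and $r(x,\tilde x,v,\tilde v)=\alpha|x-\tilde x|+|x-\tilde x+v-\tilde v|$. *)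

theory Defs
  imports "HOL-Analysis.Analysis"
begin

text \<open>Constants of the paper. \<open>lam\<close> is lambda, \<open>LU\<close> is L_U, \<open>AA\<close> is A,
  \<open>At\<close> is A-tilde; the dimension d is DIM('a).\<close>

definition gam :: "real \<Rightarrow> real" where
  "gam lam = lam / (2 * (lam + 1))"

definition Bc :: "real \<Rightarrow> real \<Rightarrow> real \<Rightarrow> nat \<Rightarrow> real" where
  "Bc lam AA At d = 24 * (AA + (lam - gam lam) * At + real d)"

definition Hf :: "('a::euclidean_space \<Rightarrow> real) \<Rightarrow> real \<Rightarrow> 'a \<Rightarrow> 'a \<Rightarrow> real" where
  "Hf U lam x v = 24 * U x + (6 * (1 - gam lam) + lam) * (norm x)\<^sup>2 + 12 * (x \<bullet> v) + 12 * (norm v)\<^sup>2"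

definition alph :: "real \<Rightarrow> real \<Rightarrow> real" where
  "alph LU lam = LU + lam / 4"

definition R1 :: "real \<Rightarrow> real \<Rightarrow> real \<Rightarrow> real \<Rightarrow> nat \<Rightarrow> real" where
  "R1 LU lam AA At d = sqrt (24 * ((1 + alph LU lam)\<^sup>2 + (alph LU lam)\<^sup>2)
      / (5 * gam lam * min 3 (lam / 3)) * Bc lam AA At d)"

definition rf :: "real \<Rightarrow> 'a::euclidean_space \<Rightarrow> 'a \<Rightarrow> 'a \<Rightarrow> 'a \<Rightarrow> real" where
  "rf a x xt v vt = a * norm (x - xt) + norm (x - xt + v - vt)"

end

theory Submission
  imports Defs
begin

lemma quad_lb:
  fixes x w :: "'a::euclidean_space" and c m :: real
  assumes "c \<ge> m + 4" "m \<le> 3" "m \<ge> 0"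
  shows "m * ((norm x)\<^sup>2 + (norm w)\<^sup>2) \<le> c * (norm x)\<^sup>2 - 12 * (x \<bullet> w) + 12 * (norm w)\<^sup>2"
proof -
  have "x \<bullet> w \<le> norm x * norm w" by (simp add: norm_cauchy_schwarz)
  moreover have "0 \<le> (2 * norm x - 3 * norm w)\<^sup>2" by simp
  moreover have "(c - m - 4) * (norm x)\<^sup>2 \<ge> 0" using assms by simp
  moreover have "(3 - m) * (norm w)\<^sup>2 \<ge> 0" using assms by simp
  ultimately show ?thesis by (simp add: power2_eq_square algebra_simps)
qed

lemma H_lb:
  fixes U :: "'a::euclidean_space \<Rightarrow> real"
  assumes U0: "\<And>x. U x \<ge> 0" and lam: "lam > 0"
  shows "min (lam/3) 3 * ((norm x)\<^sup>2 + (norm (x + v))\<^sup>2) \<le> Hf U lam x v"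
proof -
  let ?m = "min (lam/3) 3"
  let ?c = "6 * (1 - gam lam) + lam"
  have g: "gam lam = lam / (2 * (lam + 1))" by (simp add: gam_def)
  have "6 * gam lam \<le> 2 + 2 * lam / 3"
  proof -
    have "6 * gam lam = 3 * lam / (lam + 1)" using g lam by (simp add: field_simps)
    also have "\<dots> \<le> 2 + 2 * lam / 3" using lam
    proof -
      have "2 * (lam - 1/4)\<^sup>2 \<ge> 0" by simp
      hence h: "lam \<le> 6 + lam * (lam * 2)" by (simp add: power2_eq_square algebra_simps)
      show ?thesis using lam h by (simp add: field_simps)
    qed
    finally show ?thesis .
  qed
  hence c: "?c \<ge> ?m + 4" by (auto simp: min_def)
  have "?m * ((norm x)\<^sup>2 + (norm (x + v))\<^sup>2) \<le> ?c * (norm x)\<^sup>2 - 12 * (x \<bullet> (x+v)) + 12 * (norm (x+v))\<^sup>2"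
    by (rule quad_lb) (use c lam in auto)
  also have "\<dots> = ?c * (norm x)\<^sup>2 + 12 * (x \<bullet> v) + 12 * (norm v)\<^sup>2"
    by (simp add: power2_norm_eq_inner inner_add_left inner_add_right inner_commute algebra_simps)
  also have "\<dots> \<le> Hf U lam x v" using U0[of x] by (simp add: Hf_def)
  finally show ?thesis .
qed

lemma r_ub:
  fixes x xt v vt :: "'a::euclidean_space" and a :: real
  assumes a: "a \<ge> 0"
  shows "(rf a x xt v vt)\<^sup>2 \<le> 2 * ((1 + a)\<^sup>2 + a\<^sup>2) *
     ((norm x)\<^sup>2 + (norm (x + v))\<^sup>2 + ((norm xt)\<^sup>2 + (norm (xt + vt))\<^sup>2))"
proof -
  have e: "x - xt + v - vt = (x + v) - (xt + vt)" by (simp add: algebra_simps)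
  have n1: "norm (x - xt) \<le> norm x + norm xt" by (rule norm_triangle_ineq4)
  have n2: "norm ((x + v) - (xt + vt)) \<le> norm (x+v) + norm (xt+vt)" by (rule norm_triangle_ineq4)
  define p where "p = norm x + norm xt"
  define q where "q = norm (x+v) + norm (xt+vt)"
  have r0: "0 \<le> rf a x xt v vt" using a by (simp add: rf_def)
  have r1: "rf a x xt v vt \<le> a * p + q"
    unfolding rf_def e p_def q_def using n1 n2 a mult_left_mono[OF n1 a] by linarith
  have "(rf a x xt v vt)\<^sup>2 \<le> (a * p + q)\<^sup>2" using r0 r1 by (simp add: power_mono)
  also have "\<dots> \<le> (a\<^sup>2 + 1) * (p\<^sup>2 + q\<^sup>2)"
  proof -
    have "(a\<^sup>2 + 1) * (p\<^sup>2 + q\<^sup>2) - (a * p + q)\<^sup>2 = (a*q - p)\<^sup>2"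
      by (simp add: power2_eq_square algebra_simps)
    moreover have "(a*q - p)\<^sup>2 \<ge> 0" by simp
    ultimately show ?thesis by linarith
  qed
  also have "p\<^sup>2 \<le> 2 * ((norm x)\<^sup>2 + (norm xt)\<^sup>2)"
    unfolding p_def using zero_le_square[of "norm x - norm xt"] by (simp add: power2_eq_square algebra_simps)
  hence "(a\<^sup>2 + 1) * (p\<^sup>2 + q\<^sup>2) \<le> (a\<^sup>2 + 1) * (2 * ((norm x)\<^sup>2 + (norm xt)\<^sup>2) + 2 * ((norm (x+v))\<^sup>2 + (norm (xt+vt))\<^sup>2))"
    using zero_le_square[of "norm (x+v) - norm (xt+vt)"] unfolding q_def
    by (intro mult_left_mono) (simp_all add: power2_eq_square algebra_simps add_nonneg_nonneg)
  also have "\<dots> \<le> 2 * ((1 + a)\<^sup>2 + a\<^sup>2) * ((norm x)\<^sup>2 + (norm (x + v))\<^sup>2 + ((norm xt)\<^sup>2 + (norm (xt + vt))\<^sup>2))"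
  proof -
    have "a\<^sup>2 + 1 \<le> (1 + a)\<^sup>2 + a\<^sup>2" using a by (simp add: power2_eq_square algebra_simps)
    moreover have "0 \<le> (norm x)\<^sup>2 + (norm (x + v))\<^sup>2 + ((norm xt)\<^sup>2 + (norm (xt + vt))\<^sup>2)"
      by simp
    ultimately have "(a\<^sup>2 + 1) * ((norm x)\<^sup>2 + (norm (x + v))\<^sup>2 + ((norm xt)\<^sup>2 + (norm (xt + vt))\<^sup>2))
       \<le> ((1 + a)\<^sup>2 + a\<^sup>2) * ((norm x)\<^sup>2 + (norm (x + v))\<^sup>2 + ((norm xt)\<^sup>2 + (norm (xt + vt))\<^sup>2))"
      by (rule mult_right_mono)
    then show ?thesis by (simp add: algebra_simps)
  qed
  finally show ?thesis .
qed

theorem lemma2p3: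
  fixes U W :: "'a::euclidean_space \<Rightarrow> real"
    and gradU gradW :: "'a \<Rightarrow> 'a"
    and lam AA LU LW At :: real
  assumes U_deriv: "\<And>x. (U has_derivative (\<lambda>h. gradU x \<bullet> h)) (at x)"
    and U_C1: "continuous_on UNIV gradU"
    and W_deriv: "\<And>x. (W has_derivative (\<lambda>h. gradW x \<bullet> h)) (at x)"
    and W_C1: "continuous_on UNIV gradW"
    and A1_nonneg: "\<And>x. U x \<ge> 0"
    and lam_pos: "lam > 0" and AA_nonneg: "AA \<ge> 0"
    and A1: "\<And>x. (1/2) * (gradU x \<bullet> x) \<ge> lam * (U x + (norm x)\<^sup>2 / 4) - AA"
    and A2: "LU-lipschitz_on UNIV gradU" and LU_pos: "LU > 0"
    and A3_even: "\<And>x. W (- x) = W x"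
    and A3_lip: "LW-lipschitz_on UNIV gradW" and LW_small: "LW < lam / 8"
    and At_nonneg: "At \<ge> 0"
    and At_bound: "\<And>x. U x \<ge> lam / 6 * (norm x)\<^sup>2 - At"
  shows "\<forall>x xt v vt :: 'a.
      (rf (alph LU lam) x xt v vt)\<^sup>2
        \<le> 2 * (((1 + alph LU lam)\<^sup>2 + (alph LU lam)\<^sup>2) / min (lam / 3) 3)
            * (Hf U lam x v + Hf U lam xt vt)
      \<and> (rf (alph LU lam) x xt v vt \<ge> R1 LU lam AA At DIM('a) \<longrightarrow>
           gam lam * Hf U lam x v + gam lam * Hf U lam xt vt \<ge> 12 / 5 * Bc lam AA At DIM('a))"
proof (intro allI)
  fix x xt v vt :: 'a
  define a where "a = alph LU lam"
  define m where "m = min (lam / 3) 3"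
  define K where "K = (1 + a)\<^sup>2 + a\<^sup>2"
  define S where "S = (norm x)\<^sup>2 + (norm (x + v))\<^sup>2 + ((norm xt)\<^sup>2 + (norm (xt + vt))\<^sup>2)"
  define r where "r = rf a x xt v vt"
  define HH where "HH = Hf U lam x v + Hf U lam xt vt"
  have a0: "a > 0" using LU_pos lam_pos by (simp add: a_def alph_def)
  have m0: "m > 0" using lam_pos by (simp add: m_def)
  have K0: "K > 0" using a0 by (simp add: K_def add_pos_nonneg)
  have g0: "gam lam > 0" using lam_pos by (simp add: gam_def)
  have gl: "gam lam < lam" using lam_pos by (simp add: gam_def field_simps) (simp add: add_pos_nonneg)
  have B0: "Bc lam AA At DIM('a) \<ge> 0" using gl AA_nonneg At_nonneg by (simp add: Bc_def)
  have mS: "m * S \<le> HH" unfolding S_def HH_def m_def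
    using H_lb[where U=U and lam=lam and x=x and v=v, OF A1_nonneg lam_pos]
      H_lb[where U=U and lam=lam and x=xt and v=vt, OF A1_nonneg lam_pos]
    by (simp add: algebra_simps)
  have rS: "r\<^sup>2 \<le> 2 * K * S" unfolding r_def K_def S_def using r_ub[of a x xt v vt] a0 by simp
  have S0: "S \<ge> 0" by (simp add: S_def)
  have "2 * K * S \<le> 2 * (K / m) * HH"
  proof -
    have "2 * K * S = 2 * (K / m) * (m * S)" using m0 by simp
    also have "\<dots> \<le> 2 * (K / m) * HH" using mS K0 m0 by (intro mult_left_mono) auto
    finally show ?thesis .
  qed
  hence part1: "r\<^sup>2 \<le> 2 * (K / m) * HH" using rS by linarith
  have part2: "12 / 5 * Bc lam AA At DIM('a) \<le> gam lam * HH" if hr: "r \<ge> R1 LU lam AA At DIM('a)"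
  proof -
    define R where "R = R1 LU lam AA At DIM('a)"
    have R_def': "R = sqrt (24 * K / (5 * gam lam * m) * Bc lam AA At DIM('a))"
      by (simp add: R_def R1_def K_def a_def m_def min.commute)
    have arg0: "24 * K / (5 * gam lam * m) * Bc lam AA At DIM('a) \<ge> 0"
      using K0 g0 m0 B0 by simp
    have R0: "R \<ge> 0" using R_def' arg0 by simp
    have "R\<^sup>2 \<le> r\<^sup>2" using hr R0 unfolding R_def[symmetric] by (simp add: power_mono)
    hence "24 * K / (5 * gam lam * m) * Bc lam AA At DIM('a) \<le> 2 * (K / m) * HH"
      using part1 R_def' arg0 by simp
    hence "24 * K * Bc lam AA At DIM('a) / (5 * gam lam * m) \<le> 2 * K * HH / m" by simp
    hence "24 * K * Bc lam AA At DIM('a) \<le> 2 * K * HH * (5 * gam lam)"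
      using m0 g0 by (simp add: field_simps)
    hence "K * (24 * Bc lam AA At DIM('a)) \<le> K * (10 * gam lam * HH)" by (simp add: algebra_simps)
    hence "24 * Bc lam AA At DIM('a) \<le> 10 * gam lam * HH" using K0 by simp
    thus ?thesis by (simp add: algebra_simps)
  qed
  show "(rf (alph LU lam) x xt v vt)\<^sup>2
        \<le> 2 * (((1 + alph LU lam)\<^sup>2 + (alph LU lam)\<^sup>2) / min (lam / 3) 3)
            * (Hf U lam x v + Hf U lam xt vt)
      \<and> (rf (alph LU lam) x xt v vt \<ge> R1 LU lam AA At DIM('a) \<longrightarrow>
           gam lam * Hf U lam x v + gam lam * Hf U lam xt vt \<ge> 12 / 5 * Bc lam AA At DIM('a))"
    using part1 part2 unfolding r_def a_def K_def m_def HH_def by (simp add: algebra_simps)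
qed

end
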